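(* Let $\{GR_n\}$ be the Gaussian Tetranacci-Lucas numbers. Then for every $n\ge1$: (a) $\sum_{k=1}^nGR_k=\frac13\left(GR_{n+2}+2GR_n+GR_{n-1}-10+2i\right)$; (b) $\sum_{k=1}^nGR_{2k+1}=\frac13\left(2GR_{2n+2}+GR_{2n}-GR_{2n-1}-11-2i\right)$; (c) $\sum_{k=1}^nGR_{2k}=\frac13\left(2GR_{2n+1}+GR_{2n-1}-GR_{2n-2}-2-8i\right)$.
   Context: The Gaussian Tetranacci-Lucas numbers are defined by $GR_0=4-i$, $GR_1=1+4i$, $GR_2=3+i$, $GR_3=7+3i$ and $GR_n=GR_{n-1}+GR_{n-2}+GR_{n-3}+GR_{n-4}$ for $n\ge4$. *)

theory Defs
  imports Complex_Main
begin

fun GR :: "nat \<Rightarrow> complex" where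
  "GR 0 = 4 - \<i>"
| "GR (Suc 0) = 1 + 4 * \<i>"
| "GR (Suc (Suc 0)) = 3 + \<i>"
| "GR (Suc (Suc (Suc 0))) = 7 + 3 * \<i>"
| "GR (Suc (Suc (Suc (Suc n)))) =
     GR (Suc (Suc (Suc n))) + GR (Suc (Suc n)) + GR (Suc n) + GR n"

end

theory Submission
  imports Defs
begin

lemma rec4: "GR (n+4) = GR (n+3) + GR (n+2) + GR (n+1) + GR n"
  by (simp add: numeral_eq_Suc)

lemma rec5: "GR (n+5) = GR (n+4) + GR (n+3) + GR (n+2) + GR (n+1)"
  by (simp add: numeral_eq_Suc)
lemma rec6: "GR (n+6) = GR (n+5) + GR (n+4) + GR (n+3) + GR (n+2)"
  by (simp add: numeral_eq_Suc)

lemma sumSuc: "(\<Sum>k=1..Suc (Suc m). f k) = (\<Sum>k=1..Suc m. f k) + (f (Suc (Suc m)) :: complex)"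
  by simp

lemma GRc: "i = j \<Longrightarrow> GR i = GR j" by simp

lemma pa: "3 * (\<Sum>k=1..Suc m. GR k) = GR (m+3) + 2 * GR (m+1) + GR m - 10 + 2 * \<i>"
proof (induction m)
  case 0 then show ?case by (simp add: numeral_eq_Suc complex_eq_iff)
next
  case (Suc m)
  have e: "GR (Suc (Suc m)) = GR (m+2)" "GR (Suc m + 3) = GR (m+4)" "GR (Suc m + 1) = GR (m+2)"
    "GR (Suc m) = GR (m+1)"
    by (rule GRc, simp)+
  show ?case unfolding sumSuc e using Suc.IH rec4[of m] by algebra
qed

lemma pb: "3 * (\<Sum>k=1..Suc m. GR (2*k+1)) = 2 * GR (2*m+4) + GR (2*m+2) - GR (2*m+1) - 11 - 2 * \<i>"
proof (induction m)
  case 0 then show ?case by (simp add: numeral_eq_Suc complex_eq_iff)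
next
  case (Suc m)
  have e: "GR (2 * Suc (Suc m) + 1) = GR (2*m+5)" "GR (2 * Suc m + 4) = GR (2*m+6)"
    "GR (2 * Suc m + 2) = GR (2*m+4)" "GR (2 * Suc m + 1) = GR (2*m+3)"
    by (rule GRc, simp)+
  have r: "GR (2*m+6) = GR (2*m+5) + GR (2*m+4) + GR (2*m+3) + GR (2*m+2)"
    "GR (2*m+5) = GR (2*m+4) + GR (2*m+3) + GR (2*m+2) + GR (2*m+1)"
    by (rule rec6, rule rec5)
  show ?case unfolding sumSuc[of "\<lambda>k. GR (2*k+1)"] e using Suc.IH r by algebra
qed

lemma pc: "3 * (\<Sum>k=1..Suc m. GR (2*k)) = 2 * GR (2*m+3) + GR (2*m+1) - GR (2*m) - 2 - 8 * \<i>"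
proof (induction m)
  case 0 then show ?case by (simp add: numeral_eq_Suc complex_eq_iff)
next
  case (Suc m)
  have e: "GR (2 * Suc (Suc m)) = GR (2*m+4)" "GR (2 * Suc m + 3) = GR (2*m+5)"
    "GR (2 * Suc m + 1) = GR (2*m+3)" "GR (2 * Suc m) = GR (2*m+2)"
    by (rule GRc, simp)+
  have r: "GR (2*m+5) = GR (2*m+4) + GR (2*m+3) + GR (2*m+2) + GR (2*m+1)"
    "GR (2*m+4) = GR (2*m+3) + GR (2*m+2) + GR (2*m+1) + GR (2*m)"
    by (rule rec5, rule rec4)
  show ?case unfolding sumSuc[of "\<lambda>k. GR (2*k)"] e using Suc.IH r by algebra
qed

theorem mainTheorem14:
  fixes n :: nat
  assumes "n \<ge> 1"
  shows "((\<Sum>k=1..n. GR k) = (GR (n+2) + 2 * GR n + GR (n-1) - 10 + 2 * \<i>) / 3) \<and>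
    ((\<Sum>k=1..n. GR (2*k+1)) = (2 * GR (2*n+2) + GR (2*n) - GR (2*n-1) - 11 - 2 * \<i>) / 3) \<and>
    ((\<Sum>k=1..n. GR (2*k)) = (2 * GR (2*n+1) + GR (2*n-1) - GR (2*n-2) - 2 - 8 * \<i>) / 3)"
proof -
  obtain m where n: "n = Suc m" using assms by (cases n) auto
  have a: "GR (n+2) = GR (m+3)" "GR (n-1) = GR m" "GR (2*n+2) = GR (2*m+4)" "GR (2*n) = GR (2*m+2)"
    "GR (2*n-1) = GR (2*m+1)" "GR (2*n+1) = GR (2*m+3)" "GR (2*n-2) = GR (2*m)" "GR n = GR (m+1)"
    by (rule GRc, simp add: n)+
  show ?thesis unfolding a
    using pa[of m] pb[of m] pc[of m] unfolding n[symmetric]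
    by (simp add: eq_divide_eq mult.commute)
qed

end
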